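(* Let $I\subseteq\mathbb{R}$ be an interval and let $f,g\in C^2(I)$ with $g''(t)>0$ for all $t\in I$. For $a,b\in I$, $a\neq b$, put $$\Lambda_{f,g}(a,b)=\frac{f(a)+f(b)-2f\left(\frac{a+b}{2}\right)}{g(a)+g(b)-2g\left(\frac{a+b}{2}\right)}.$$ Then the inequality $\min\{a,b\}\le \Lambda_{f,g}(a,b)\le \max\{a,b\}$ holds for all $a,b\in I$ with $a\ne b$ if and only if $f''(t)=t\,g''(t)$ for every $t\in I$.
   Context: Since $g''>0$, the function $g$ is strictly convex on $I$, so the denominator $g(a)+g(b)-2g((a+b)/2)$ is strictly positive for $a\neq b$. *)

theory Defs
  imports "HOL-Analysis.Analysis"
begin

definition Lambda :: "(real \<Rightarrow> real) \<Rightarrow> (real \<Rightarrow> real) \<Rightarrow> real \<Rightarrow> real \<Rightarrow> real" where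
  "Lambda f g a b = (f a + f b - 2 * f ((a + b) / 2)) / (g a + g b - 2 * g ((a + b) / 2))"

text \<open>f is in C^2(I), with first derivative f1 and second derivative f2
  (one-sided at endpoints of I, i.e. derivatives taken within I).\<close>
definition C2_on :: "real set \<Rightarrow> (real \<Rightarrow> real) \<Rightarrow> (real \<Rightarrow> real) \<Rightarrow> (real \<Rightarrow> real) \<Rightarrow> bool" where
  "C2_on I f f1 f2 \<longleftrightarrow>
     (\<forall>t\<in>I. (f has_real_derivative f1 t) (at t within I)) \<and>
     (\<forall>t\<in>I. (f1 has_real_derivative f2 t) (at t within I)) \<and>
     continuous_on I f2"

end

theory Submission
  imports Defs
begin

lemma mvt_I:
  fixes u u1 :: "real \<Rightarrow> real"
  assumes xy: "x < y" and sub: "{x..y} \<subseteq> I"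
    and d: "\<forall>t\<in>I. (u has_real_derivative u1 t) (at t within I)"
  shows "\<exists>z\<in>{x<..<y}. u y - u x = (y - x) * u1 z"
proof -
  have "\<exists>z\<in>{x<..<y}. u y - u x = (*) (u1 z) (y - x)"
  proof (rule mvt_simple[OF xy])
    fix t assume "x \<le> t" "t \<le> y"
    then have "t \<in> I" using sub by auto
    then have "(u has_real_derivative u1 t) (at t within {x..y})"
      using d has_field_derivative_subset sub by blast
    then show "(u has_derivative (*) (u1 t)) (at t within {x..y})"
      by (simp add: has_field_derivative_def)
  qed
  then show ?thesis by (auto simp: mult.commute)
qed

lemma second_diff:
  fixes u u1 u2 :: "real \<Rightarrow> real"
  assumes ab: "a < b" and sub: "{a..b} \<subseteq> I"
    and d1: "\<forall>t\<in>I. (u has_real_derivative u1 t) (at t within I)"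
    and d2: "\<forall>t\<in>I. (u1 has_real_derivative u2 t) (at t within I)"
  shows "\<exists>z\<in>{a..b}. \<exists>k>0. u a + u b - 2 * u ((a+b)/2) = k * u2 z"
proof -
  define m where "m = (a+b)/2"
  have am: "a < m" and mb: "m < b" using ab by (auto simp: m_def)
  obtain x where x: "x \<in> {a<..<m}" and ex: "u m - u a = (m - a) * u1 x"
    using mvt_I[OF am _ d1] sub mb by force
  obtain y where y: "y \<in> {m<..<b}" and ey: "u b - u m = (b - m) * u1 y"
    using mvt_I[OF mb _ d1] sub am by force
  have xy: "x < y" using x y by auto
  obtain z where z: "z \<in> {x<..<y}" and ez: "u1 y - u1 x = (y - x) * u2 z"
    using mvt_I[OF xy _ d2] sub x y by force
  have bm: "b - m = m - a" by (simp add: m_def field_simps)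
  have "u a + u b - 2 * u m = (m - a) * (u1 y - u1 x)"
    using ex ey bm by (simp add: algebra_simps)
  also have "\<dots> = ((m - a) * (y - x)) * u2 z" using ez by simp
  finally have "u a + u b - 2 * u m = ((m - a) * (y - x)) * u2 z" .
  moreover have "(m - a) * (y - x) > 0" using am xy by simp
  moreover have "z \<in> {a..b}" using z x y by auto
  ultimately show ?thesis unfolding m_def by blast
qed


lemma N_comb:
  assumes F: "C2_on I f f1 f2" and G: "C2_on I g g1 g2"
    and ab: "a < b" and sub: "{a..b} \<subseteq> I"
  shows "\<exists>z\<in>{a..b}. \<exists>k>0. (f a + f b - 2 * f ((a+b)/2)) - c * (g a + g b - 2 * g ((a+b)/2))
           = k * (f2 z - c * g2 z)"
proof -
  have d1: "\<forall>t\<in>I. ((\<lambda>t. f t - c * g t) has_real_derivative (f1 t - c * g1 t)) (at t within I)"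
    using F G unfolding C2_on_def by (auto intro!: derivative_eq_intros)
  have d2: "\<forall>t\<in>I. ((\<lambda>t. f1 t - c * g1 t) has_real_derivative (f2 t - c * g2 t)) (at t within I)"
    using F G unfolding C2_on_def by (auto intro!: derivative_eq_intros)
  obtain z k where "z \<in> {a..b}" "k > 0"
    "(f a - c * g a) + (f b - c * g b) - 2 * (f ((a+b)/2) - c * g ((a+b)/2)) = k * (f2 z - c * g2 z)"
    using second_diff[OF ab sub d1 d2] by auto
  then show ?thesis by (intro bexI[of _ z] exI[of _ k]) (auto simp: algebra_simps)
qed

lemma small_interval:
  fixes I :: "real set"
  assumes iv: "is_interval I" and t0: "t0 \<in> I" and s: "s \<in> I" "s \<noteq> t0" and eta: "\<eta> > 0"
  shows "\<exists>a b. a < b \<and> {a..b} \<subseteq> I \<and> (\<forall>t\<in>{a..b}. \<bar>t - t0\<bar> < \<eta>) \<and> b - a < \<eta>"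
proof -
  define r where "r = min \<bar>s - t0\<bar> (\<eta>/2)"
  have r: "r > 0" "r \<le> \<bar>s - t0\<bar>" "r < \<eta>" using s eta by (auto simp: r_def)
  have iv1: "\<And>a b x. a \<in> I \<Longrightarrow> b \<in> I \<Longrightarrow> a \<le> x \<Longrightarrow> x \<le> b \<Longrightarrow> x \<in> I"
    using iv unfolding is_interval_1 by blast
  show ?thesis
  proof (cases "s > t0")
    case True
    have "{t0..t0+r} \<subseteq> I"
    proof
      fix x assume "x \<in> {t0..t0+r}"
      then have "t0 \<le> x" "x \<le> s" using r True by auto
      then show "x \<in> I" using iv1[OF t0 s(1)] by blast
    qed
    moreover have "\<forall>t\<in>{t0..t0+r}. \<bar>t - t0\<bar> < \<eta>" using r by auto
    ultimately show ?thesis using r by (intro exI[of _ t0] exI[of _ "t0 + r"]) auto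
  next
    case False
    then have st: "s < t0" using s by auto
    have "{t0-r..t0} \<subseteq> I"
    proof
      fix x assume "x \<in> {t0-r..t0}"
      then have "s \<le> x" "x \<le> t0" using r st by auto
      then show "x \<in> I" using iv1[OF s(1) t0] by blast
    qed
    moreover have "\<forall>t\<in>{t0-r..t0}. \<bar>t - t0\<bar> < \<eta>" using r by auto
    ultimately show ?thesis using r by (intro exI[of _ "t0 - r"] exI[of _ t0]) auto
  qed
qed

lemma Lambda_sym: "Lambda f g b a = Lambda f g a b"
  by (simp add: Lambda_def add.commute)

theorem theorem1:
  fixes I :: "real set" and f g f1 f2 g1 g2 :: "real \<Rightarrow> real"
  assumes "is_interval I" and "interior I \<noteq> {}"
    and "C2_on I f f1 f2" and "C2_on I g g1 g2"
    and "\<forall>t\<in>I. g2 t > 0"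
  shows "(\<forall>a\<in>I. \<forall>b\<in>I. a \<noteq> b \<longrightarrow>
            min a b \<le> Lambda f g a b \<and> Lambda f g a b \<le> max a b)
         \<longleftrightarrow> (\<forall>t\<in>I. f2 t = t * g2 t)"
proof -
  note iv = assms(1) and F = assms(3) and G = assms(4) and gpos = assms(5)
  have iv1: "\<And>a b x. a \<in> I \<Longrightarrow> b \<in> I \<Longrightarrow> a \<le> x \<Longrightarrow> x \<le> b \<Longrightarrow> x \<in> I"
    using iv unfolding is_interval_1 by blast
  have sub: "{a..b} \<subseteq> I" if "a \<in> I" "b \<in> I" for a b
    using iv1[OF that] by (simp add: subset_eq)
  have Ng: "g a + g b - 2 * g ((a+b)/2) > 0" if hab: "a < b" "a \<in> I" "b \<in> I" for a b
  proof -
    obtain z k where z: "z \<in> {a..b}" "k > 0"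
      "(g a + g b - 2 * g ((a+b)/2)) - 0 * (g a + g b - 2 * g ((a+b)/2)) = k * (g2 z - 0 * g2 z)"
      using N_comb[OF G G hab(1) sub[OF hab(2,3)], of 0] by blast
    have "z \<in> I" using z(1) sub[OF hab(2,3)] by blast
    then have "g2 z > 0" using gpos by blast
    with z show ?thesis by simp
  qed
  show ?thesis
  proof
    assume H: "\<forall>a\<in>I. \<forall>b\<in>I. a \<noteq> b \<longrightarrow> min a b \<le> Lambda f g a b \<and> Lambda f g a b \<le> max a b"
    show "\<forall>t\<in>I. f2 t = t * g2 t"
    proof (rule ccontr)
      assume "\<not> ?thesis"
      then obtain t0 where t0: "t0 \<in> I" and ne: "f2 t0 \<noteq> t0 * g2 t0" by auto
      define h where "h t = f2 t - t * g2 t" for t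
      have f2c: "continuous_on I f2" using F unfolding C2_on_def by auto
      have g2c': "continuous_on I g2" using G unfolding C2_on_def by auto
      have "continuous_on I (\<lambda>t. t * g2 t)" by (rule continuous_on_mult[OF continuous_on_id g2c'])
      then have hc: "continuous_on I h" unfolding h_def by (rule continuous_on_diff[OF f2c])
      have g2c: "continuous_on I g2" using G unfolding C2_on_def by auto
      define c where "c = \<bar>h t0\<bar> / 2"
      have c: "c > 0" using ne by (simp add: c_def h_def)
      obtain d1 where d1: "d1 > 0" "\<forall>t\<in>I. dist t t0 < d1 \<longrightarrow> dist (h t) (h t0) < c"
        using hc t0 c unfolding continuous_on_iff by blast
      obtain d2 where d2: "d2 > 0" "\<forall>t\<in>I. dist t t0 < d2 \<longrightarrow> dist (g2 t) (g2 t0) < 1"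
        using g2c t0 unfolding continuous_on_iff by (meson zero_less_one)
      define M where "M = g2 t0 + 1"
      have M: "M > 0" using gpos t0 by (simp add: M_def add_pos_pos)
      define \<eta> where "\<eta> = min (min d1 d2) (c / M)"
      have eta: "\<eta> > 0" using d1 d2 c M by (simp add: \<eta>_def)
      obtain x where "x \<in> interior I" using assms(2) by auto
      then obtain e where e: "e > 0" "ball x e \<subseteq> I" using mem_interior by blast
      have xI: "x \<in> I" "x + e/2 \<in> I" using e by (auto simp: dist_real_def)
      define s where "s = (if x = t0 then x + e/2 else x)"
      have s: "s \<in> I" "s \<noteq> t0" using xI e by (auto simp: s_def)
      obtain a b where ab: "a < b" "{a..b} \<subseteq> I" "\<forall>t\<in>{a..b}. \<bar>t - t0\<bar> < \<eta>" "b - a < \<eta>"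
        using small_interval[OF iv t0 s eta] by blast
      have aI: "a \<in> I" "b \<in> I" using ab by auto
      have near: "h t0 - c < h t \<and> h t < h t0 + c \<and> 0 < g2 t \<and> g2 t < M" if "t \<in> {a..b}" for t
      proof -
        have tI: "t \<in> I" using ab that by auto
        have "dist t t0 < d1" "dist t t0 < d2" using ab(3) that by (auto simp: dist_real_def \<eta>_def)
        then show ?thesis using d1 d2 tI gpos by (auto simp: dist_real_def M_def)
      qed
      have small: "(b - a) * g2 t < c" if "t \<in> {a..b}" for t
      proof -
        have "b - a < c / M" using ab(4) by (simp add: \<eta>_def)
        then have "(b - a) * M < c" using M by (simp add: pos_less_divide_eq)
        moreover have "(b - a) * g2 t \<le> (b - a) * M" using near[OF that] ab(1) by simp
        ultimately show ?thesis by linarith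
      qed
      have Ngab: "g a + g b - 2 * g ((a+b)/2) > 0" using Ng[OF ab(1) aI] .
      have "a \<noteq> b" using ab(1) by simp
      then have "min a b \<le> Lambda f g a b \<and> Lambda f g a b \<le> max a b" using H aI by blast
      moreover have "min a b = a" "max a b = b" using ab(1) by auto
      ultimately have Hab: "a \<le> Lambda f g a b \<and> Lambda f g a b \<le> b" by simp
      show False
      proof (cases "h t0 > 0")
        case True
        obtain z k where z: "z \<in> {a..b}" "k > 0"
          "(f a + f b - 2 * f ((a+b)/2)) - b * (g a + g b - 2 * g ((a+b)/2)) = k * (f2 z - b * g2 z)"
          using N_comb[OF F G ab(1) ab(2), of b] by blast
        have "f2 z - b * g2 z = h z - (b - z) * g2 z" by (simp add: h_def algebra_simps)
        moreover have "(b - z) * g2 z \<le> (b - a) * g2 z" using near[OF z(1)] z(1) by (intro mult_right_mono) auto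
        moreover have "h z > c" using near[OF z(1)] True c_def by auto
        ultimately have "f2 z - b * g2 z > 0" using small[OF z(1)] by linarith
        then have "k * (f2 z - b * g2 z) > 0" using z(2) by simp
        then have "(f a + f b - 2 * f ((a+b)/2)) > b * (g a + g b - 2 * g ((a+b)/2))"
          using z(3) by linarith
        then have "Lambda f g a b > b" using Ngab by (simp add: Lambda_def pos_less_divide_eq)
        then show False using Hab by simp
      next
        case False
        then have hneg: "h t0 < 0" using c by (auto simp: c_def)
        obtain z k where z: "z \<in> {a..b}" "k > 0"
          "(f a + f b - 2 * f ((a+b)/2)) - a * (g a + g b - 2 * g ((a+b)/2)) = k * (f2 z - a * g2 z)"
          using N_comb[OF F G ab(1) ab(2), of a] by blast
        have "f2 z - a * g2 z = h z + (z - a) * g2 z" by (simp add: h_def algebra_simps)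
        moreover have "(z - a) * g2 z \<le> (b - a) * g2 z" using near[OF z(1)] z(1) by (intro mult_right_mono) auto
        moreover have "h z < - c" using near[OF z(1)] hneg c_def by auto
        ultimately have "f2 z - a * g2 z < 0" using small[OF z(1)] by linarith
        then have "k * (f2 z - a * g2 z) < 0" using z(2) by (simp add: mult_pos_neg)
        then have "(f a + f b - 2 * f ((a+b)/2)) < a * (g a + g b - 2 * g ((a+b)/2))"
          using z(3) by linarith
        then have "Lambda f g a b < a" using Ngab by (simp add: Lambda_def pos_divide_less_eq)
        then show False using Hab by simp
      qed
    qed
  next
    assume E: "\<forall>t\<in>I. f2 t = t * g2 t"
    have main: "a \<le> Lambda f g a b \<and> Lambda f g a b \<le> b" if ab: "a < b" "a \<in> I" "b \<in> I" for a b
    proof -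
      have Ngab: "g a + g b - 2 * g ((a+b)/2) > 0" using Ng[OF ab] .
      obtain z k where z: "z \<in> {a..b}" "k > 0"
        "(f a + f b - 2 * f ((a+b)/2)) - a * (g a + g b - 2 * g ((a+b)/2)) = k * (f2 z - a * g2 z)"
        using N_comb[OF F G ab(1) sub[OF ab(2,3)], of a] by blast
      have "z \<in> I" using z(1) sub[OF ab(2,3)] by auto
      then have "f2 z - a * g2 z = (z - a) * g2 z" using E by (simp add: algebra_simps)
      moreover have "(z - a) * g2 z \<ge> 0" using z(1) gpos \<open>z \<in> I\<close> by (simp add: less_imp_le)
      ultimately have "k * (f2 z - a * g2 z) \<ge> 0" using z(2) by simp
      then have L: "a * (g a + g b - 2 * g ((a+b)/2)) \<le> (f a + f b - 2 * f ((a+b)/2))"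
        using z(3) by linarith
      obtain z' k' where z': "z' \<in> {a..b}" "k' > 0"
        "(f a + f b - 2 * f ((a+b)/2)) - b * (g a + g b - 2 * g ((a+b)/2)) = k' * (f2 z' - b * g2 z')"
        using N_comb[OF F G ab(1) sub[OF ab(2,3)], of b] by blast
      have "z' \<in> I" using z'(1) sub[OF ab(2,3)] by auto
      then have "f2 z' - b * g2 z' = - ((b - z') * g2 z')" using E by (simp add: algebra_simps)
      moreover have "(b - z') * g2 z' \<ge> 0" using z'(1) gpos \<open>z' \<in> I\<close> by (simp add: less_imp_le)
      ultimately have "k' * (f2 z' - b * g2 z') \<le> 0" using z'(2) by (simp add: mult_nonneg_nonneg)
      then have R: "(f a + f b - 2 * f ((a+b)/2)) \<le> b * (g a + g b - 2 * g ((a+b)/2))"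
        using z'(3) by linarith
      show ?thesis using L R Ngab
        by (simp add: Lambda_def pos_le_divide_eq pos_divide_le_eq)
    qed
    show "\<forall>a\<in>I. \<forall>b\<in>I. a \<noteq> b \<longrightarrow> min a b \<le> Lambda f g a b \<and> Lambda f g a b \<le> max a b"
    proof (intro ballI impI)
      fix a b assume "a \<in> I" "b \<in> I" "a \<noteq> b"
      then consider "a < b" | "b < a" by linarith
      then show "min a b \<le> Lambda f g a b \<and> Lambda f g a b \<le> max a b"
      proof cases
        case 1 then show ?thesis using main[OF 1 \<open>a\<in>I\<close> \<open>b\<in>I\<close>] by simp
      next
        case 2 then show ?thesis using main[OF 2 \<open>b\<in>I\<close> \<open>a\<in>I\<close>] Lambda_sym[of f g a b] by simp
      qed
    qed
  qed
qed

end
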